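(* Let $n\ge 2$, let $\Omega_0\subset\mathbb{R}^n$ be a ball and let $V\in C^1(\mathbb{R}^n,\mathbb{R}^n)$. Suppose that the point $x=0$ is the center of mass of the domain $\Omega_t^V$ for all $t$ sufficiently close to $0$, and that the function $v(x)=\langle V(x),x\rangle$ restricted to $\partial\Omega_0$ is a first order spherical harmonic (i.e. $v(x)=\langle b,x\rangle$ on $\partial\Omega_0$ for some $b\in\mathbb{R}^n$). Then $v=0$ on $\partial\Omega_0$.
   Context: $T_t^V$ denotes the flow of the ODE $\dot x=V(x)$ and $\Omega_t^V=T_t^V(\Omega_0)$. The center of mass of a bounded domain $D$ is $\frac{1}{|D|}\int_D x\,dx$. *)

theory Defs
  imports "HOL-Analysis.Analysis"
begin

definition center_of_mass :: "'a::euclidean_space set \<Rightarrow> 'a" where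
  "center_of_mass D = (1 / measure lebesgue D) *\<^sub>R integral D (\<lambda>x. x)"

definition C1_field :: "('a::euclidean_space \<Rightarrow> 'a) \<Rightarrow> bool" where
  "C1_field V \<longleftrightarrow> (\<exists>D :: 'a \<Rightarrow> 'a \<Rightarrow>\<^sub>L 'a.
      (\<forall>x. (V has_derivative blinfun_apply (D x)) (at x)) \<and> continuous_on UNIV D)"

definition is_flow_on :: "('a::euclidean_space \<Rightarrow> 'a) \<Rightarrow> real \<Rightarrow> 'a set \<Rightarrow> (real \<Rightarrow> 'a \<Rightarrow> 'a) \<Rightarrow> bool" where
  "is_flow_on V e S phi \<longleftrightarrow>
     (\<forall>x\<in>S. phi 0 x = x \<and>
        (\<forall>t\<in>{-e<..<e}. ((\<lambda>s. phi s x) has_vector_derivative V (phi t x)) (at t)))"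

end

theory Submission
  imports Defs
begin


lemma ball_sub_cbox:
  fixes a :: "'a::euclidean_space"
  shows "ball a R \<subseteq> cbox (a - R *\<^sub>R One) (a + R *\<^sub>R One)"
proof
  fix x assume "x \<in> ball a R"
  then have d: "norm (x - a) < R" by (simp add: dist_norm norm_minus_commute)
  show "x \<in> cbox (a - R *\<^sub>R One) (a + R *\<^sub>R One)"
    unfolding mem_box
  proof (intro ballI conjI)
    fix i :: 'a assume i: "i \<in> Basis"
    have "\<bar>(x - a) \<bullet> i\<bar> \<le> norm (x - a)" using Basis_le_norm[OF i] by simp
    then have "\<bar>x \<bullet> i - a \<bullet> i\<bar> < R" using d by (simp add: inner_diff_left)
    then show "(a - R *\<^sub>R One) \<bullet> i \<le> x \<bullet> i" "x \<bullet> i \<le> (a + R *\<^sub>R One) \<bullet> i"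
      using i by (auto simp: inner_diff_left inner_add_left)
  qed
qed

lemma integral_ball_centered:
  fixes a :: "'a::euclidean_space"
  shows "integral (ball a R) (\<lambda>x. x - a) = 0"
proof -
  define u where "u = a - R *\<^sub>R One"
  define v where "v = a + R *\<^sub>R One"
  define g where "g = (\<lambda>x. if x \<in> ball a R then x - a else 0)"
  have sub: "ball a R \<subseteq> cbox u v" unfolding u_def v_def by (rule ball_sub_cbox)
  show ?thesis
  proof (cases "(\<lambda>x. x - a) integrable_on ball a R")
    case False then show ?thesis by (simp add: not_integrable_integral)
  next
    case True
    define I where "I = integral (ball a R) (\<lambda>x. x - a)"
    have h1: "((\<lambda>x. x - a) has_integral I) (ball a R)" using True I_def by auto
    have h2: "(g has_integral I) (cbox u v)" unfolding g_def using has_integral_restrict[OF sub, of "\<lambda>x. x - a"] h1 by simp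
    have h3: "((\<lambda>x. g ((-1) *\<^sub>R x + 2 *\<^sub>R a)) has_integral (1 / (\<bar>-1\<bar> ^ DIM('a))) *\<^sub>R I)
        ((\<lambda>x. (1 / (-1)) *\<^sub>R x + -((1 / (-1)) *\<^sub>R (2 *\<^sub>R a))) ` cbox u v)"
      by (rule has_integral_affinity[OF h2]) simp
    have img: "(\<lambda>x. (1 / (-1::real)) *\<^sub>R x + -((1 / (-1)) *\<^sub>R (2 *\<^sub>R a))) ` cbox u v = cbox u v"
    proof (cases "cbox u v = {}")
      case True then show ?thesis by simp
    next
      case False
      have e: "(\<lambda>x. (1 / (-1::real)) *\<^sub>R x + -((1 / (-1)) *\<^sub>R (2 *\<^sub>R a))) = (\<lambda>x. (-1) *\<^sub>R x + 2 *\<^sub>R a)"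
        by auto
      have "(\<lambda>x. (-1) *\<^sub>R x + 2 *\<^sub>R a) ` cbox u v = cbox ((-1) *\<^sub>R v + 2 *\<^sub>R a) ((-1) *\<^sub>R u + 2 *\<^sub>R a)"
        unfolding image_affinity_cbox using False by simp
      also have "(-1) *\<^sub>R v + 2 *\<^sub>R a = u" unfolding u_def v_def by (simp add: scaleR_2 algebra_simps)
      also have "(-1) *\<^sub>R u + 2 *\<^sub>R a = v" unfolding u_def v_def by (simp add: scaleR_2 algebra_simps)
      finally show ?thesis unfolding e .
    qed
    have gm: "g ((-1) *\<^sub>R x + 2 *\<^sub>R a) = - g x" for x
    proof -
      have "((-1) *\<^sub>R x + 2 *\<^sub>R a \<in> ball a R) = (x \<in> ball a R)"
      proof -
        have "a - ((-1) *\<^sub>R x + 2 *\<^sub>R a) = -(a - x)" by (simp add: scaleR_2 algebra_simps)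
        then have "norm (a - ((-1) *\<^sub>R x + 2 *\<^sub>R a)) = norm (a - x)" by (metis norm_minus_cancel)
        then show ?thesis by (simp only: mem_ball dist_norm)
      qed
      moreover have "(-1) *\<^sub>R x + 2 *\<^sub>R a - a = - (x - a)" by (simp add: scaleR_2 algebra_simps)
      ultimately show ?thesis unfolding g_def by (cases "x \<in> ball a R") (simp_all only: if_True if_False neg_0_equal_iff_equal)
    qed
    have fe: "(\<lambda>x. g ((-1) *\<^sub>R x + 2 *\<^sub>R a)) = (\<lambda>x. - g x)" using gm by (rule ext)
    have "((\<lambda>x. - g x) has_integral I) (cbox u v)" using h3 unfolding img fe by (simp only: abs_neg_one power_one div_by_1 scaleR_one)
    from has_integral_neg[OF this] have "(g has_integral - I) (cbox u v)" by simp
    then have "- I = I" using h2 has_integral_unique by blast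
    then have "I + I = 0" by (metis add.right_inverse)
    then have "(2::real) *\<^sub>R I = 0" by (simp only: scaleR_2)
    then show ?thesis unfolding I_def by simp
  qed
qed



lemma brouwer_hit:
  fixes G :: "'a::euclidean_space \<Rightarrow> 'a"
  assumes rho: "\<rho> > 0" and cont: "continuous_on (cball 0 \<rho>) G"
    and bd: "\<And>y. y \<in> sphere 0 \<rho> \<Longrightarrow> G y \<bullet> y > norm q * \<rho>"
  shows "\<exists>y\<in>cball 0 \<rho>. G y = q"
proof (rule ccontr)
  assume "\<not> (\<exists>y\<in>cball 0 \<rho>. G y = q)"
  then have ne: "\<And>y. y \<in> cball 0 \<rho> \<Longrightarrow> norm (G y - q) \<noteq> 0" by auto
  define P where "P = (\<lambda>y. - (\<rho> / norm (G y - q)) *\<^sub>R (G y - q))"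
  have cP: "continuous_on (cball 0 \<rho>) P" unfolding P_def
    using ne by (intro continuous_intros cont) auto
  have nP: "\<And>y. y \<in> cball 0 \<rho> \<Longrightarrow> norm (P y) = \<rho>"
    unfolding P_def using ne rho by (simp add: abs_of_pos)
  have fim: "P \<in> cball 0 \<rho> \<rightarrow> cball 0 \<rho>" using nP by auto
  obtain y where y: "y \<in> cball 0 \<rho>" "P y = y"
    using brouwer[OF compact_cball convex_cball _ cP fim] rho by auto
  have ny: "norm y = \<rho>" using nP[OF y(1)] y(2) by simp
  define n where "n = norm (G y - q)"
  have npos: "n > 0" using ne[OF y(1)] unfolding n_def by simp
  have "y \<bullet> (G y - q) = - (\<rho> / n) * ((G y - q) \<bullet> (G y - q))"
    using y(2) unfolding P_def n_def by (metis inner_minus_left inner_scaleR_left)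
  also have "(G y - q) \<bullet> (G y - q) = n^2" unfolding n_def by (simp add: power2_norm_eq_inner)
  finally have "y \<bullet> (G y - q) = - (\<rho> * n)" using npos by (simp add: power2_eq_square)
  then have neg: "y \<bullet> (G y - q) < 0" using npos rho by simp
  have "y \<bullet> q \<le> norm y * norm q" using norm_cauchy_schwarz by blast
  then have "y \<bullet> q \<le> norm q * \<rho>" using ny by (simp add: mult.commute)
  moreover have "G y \<bullet> y > norm q * \<rho>" using bd[of y] ny by simp
  ultimately have "y \<bullet> (G y - q) > 0" by (simp add: inner_diff_right inner_commute)
  then show False using neg by simp
qed


lemma int_facts:
  fixes S :: "'a::euclidean_space set"
  assumes S: "S \<in> lmeasurable" and sub: "S \<subseteq> cball p R"
  shows "(\<lambda>x. x) integrable_on S" "(\<lambda>x. x - p) integrable_on S"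
    "norm (integral S (\<lambda>x. x - p)) \<le> R * measure lebesgue S"
    "integral S (\<lambda>x. x - p) = integral S (\<lambda>x. x) - measure lebesgue S *\<^sub>R p"
proof -
  have Sl: "S \<in> sets lebesgue" using S by (simp add: fmeasurableD)
  have cI: "(\<lambda>x. R + norm p) integrable_on S" by (rule integrable_on_const[OF S])
  show i1: "(\<lambda>x. x) integrable_on S"
  proof (rule measurable_bounded_by_integrable_imp_integrable[OF _ cI _ Sl])
    show "(\<lambda>x. x) \<in> borel_measurable (lebesgue_on S)"
      by (rule continuous_imp_measurable_on_sets_lebesgue[OF continuous_on_id Sl])
    fix x assume "x \<in> S"
    then have "norm (x - p) \<le> R" using sub by (auto simp: dist_norm norm_minus_commute)
    then show "norm x \<le> R + norm p" using norm_triangle_ineq[of "x - p" p] by simp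
  qed
  have ip: "(\<lambda>x. p) integrable_on S" by (rule integrable_on_const[OF S])
  show i2: "(\<lambda>x. x - p) integrable_on S" using integrable_diff[OF i1 ip] .
  have cR: "(\<lambda>x. R) integrable_on S" by (rule integrable_on_const[OF S])
  have "norm (integral S (\<lambda>x. x - p)) \<le> integral S (\<lambda>x. R)"
  proof (rule integral_norm_bound_integral[OF i2 cR])
    fix x assume "x \<in> S"
    then show "norm (x - p) \<le> R" using sub by (auto simp: dist_norm norm_minus_commute)
  qed
  also have "integral S (\<lambda>x. R) = R * measure lebesgue S"
    using lmeasure_integral[OF S] integral_mult_right[of S R "\<lambda>x. 1"] by simp
  finally show "norm (integral S (\<lambda>x. x - p)) \<le> R * measure lebesgue S" .
  have "integral S (\<lambda>x. p) = integral S (\<lambda>x. (1::real) *\<^sub>R p)" by simp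
  also have "\<dots> = integral S (\<lambda>x. 1::real) *\<^sub>R p"
    by (rule integral_unique[OF has_integral_scaleR_left[OF integrable_integral[OF integrable_on_const[OF S]]]])
  also have "\<dots> = measure lebesgue S *\<^sub>R p" using lmeasure_integral[OF S] by simp
  finally show "integral S (\<lambda>x. x - p) = integral S (\<lambda>x. x) - measure lebesgue S *\<^sub>R p"
    using integral_diff[OF i1 ip] by simp
qed

lemma measure_ball_eq:
  fixes c :: "'a::euclidean_space"
  assumes "R \<ge> 0"
  shows "measure lebesgue (ball c R) = R ^ DIM('a) * measure lebesgue (ball (0::'a) 1)"
    "measure lebesgue (cball c R) = R ^ DIM('a) * measure lebesgue (ball (0::'a) 1)"
  using content_ball_conv_unit_ball[OF assms, of c] content_cball_conv_ball[of c R]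
  by (simp_all add: measure_completion)

lemma image_meas:
  fixes f :: "'a::euclidean_space \<Rightarrow> 'a"
  assumes r: "r > 0" and cont: "continuous_on (ball 0 r) f"
  shows "f ` ball 0 r \<in> sets lebesgue"
proof -
  define A where "A = (\<lambda>k::nat. f ` cball 0 (r - r / (real k + 2)))"
  have eq: "f ` ball 0 r = (\<Union>k. A k)"
  proof
    show "f ` ball 0 r \<subseteq> (\<Union>k. A k)"
    proof
      fix y assume "y \<in> f ` ball 0 r"
      then obtain x where x: "norm x < r" "y = f x" by auto
      obtain k :: nat where k: "r / (r - norm x) < real k" using reals_Archimedean2 by blast
      have pos: "r - norm x > 0" using x by simp
      have "r < real k * (r - norm x)" using k pos by (simp add: field_simps)
      also have "\<dots> \<le> (real k + 2) * (r - norm x)" using pos by (intro mult_right_mono) auto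
      finally have "r / (real k + 2) < r - norm x" by (simp add: field_simps)
      then have "x \<in> cball 0 (r - r / (real k + 2))" by simp
      then show "y \<in> (\<Union>k. A k)" unfolding A_def using x by blast
    qed
  next
    show "(\<Union>k. A k) \<subseteq> f ` ball 0 r"
    proof -
      have "cball 0 (r - r / (real k + 2)) \<subseteq> ball 0 r" for k
      proof -
        have "r / (real k + 2) > 0" using r by simp
        then show ?thesis by auto
      qed
      then show ?thesis unfolding A_def by blast
    qed
  qed
  have "A k \<in> sets lebesgue" for k
  proof -
    have "cball 0 (r - r / (real k + 2)) \<subseteq> ball 0 r"
    proof -
      have "r / (real k + 2) > 0" using r by simp
      then show ?thesis by auto
    qed
    then have "compact (A k)" unfolding A_def
      by (intro compact_continuous_image continuous_on_subset[OF cont]) auto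
    then show ?thesis using lmeasurable_compact fmeasurableD by blast
  qed
  then show ?thesis unfolding eq by (intro sets.countable_UN) auto
qed

lemma power_diff_bound:
  fixes x y :: real
  assumes "0 \<le> y" "y \<le> x" "n \<ge> 1"
  shows "x * (x^n - y^n) \<le> real n * x^n * (x - y)"
proof -
  have "x^n - y^n = (x - y) * (\<Sum>i<n. y ^ (n - Suc i) * x ^ i)" by (rule power_diff_sumr2)
  also have "(\<Sum>i<n. y ^ (n - Suc i) * x ^ i) \<le> (\<Sum>i<n. x ^ (n - 1))"
  proof (rule sum_mono)
    fix i assume i: "i \<in> {..<n}"
    have "y ^ (n - Suc i) * x ^ i \<le> x ^ (n - Suc i) * x ^ i"
      using assms by (intro mult_right_mono power_mono) auto
    also have "\<dots> = x ^ (n - 1)" using i by (simp add: power_add[symmetric])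
    finally show "y ^ (n - Suc i) * x ^ i \<le> x ^ (n - 1)" .
  qed
  then have "(x - y) * (\<Sum>i<n. y ^ (n - Suc i) * x ^ i) \<le> (x - y) * (real n * x ^ (n - 1))"
    using assms by (intro mult_left_mono) auto
  finally have "x * (x^n - y^n) \<le> x * ((x - y) * (real n * x ^ (n - 1)))"
    using assms by (intro mult_left_mono) auto
  also have "\<dots> = real n * (x * x ^ (n - 1)) * (x - y)" by (simp add: algebra_simps)
  also have "x * x ^ (n - 1) = x ^ n" using assms(3) by (metis Suc_diff_1 less_le_trans power_Suc zero_less_one)
  finally show ?thesis .
qed



lemma mvt_bound:
  fixes f :: "real \<Rightarrow> 'a::euclidean_space"
  assumes "a \<le> b"
    and der: "\<And>s. s \<in> {a..b} \<Longrightarrow> (f has_vector_derivative f' s) (at s)"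
    and bd: "\<And>s. s \<in> {a<..<b} \<Longrightarrow> norm (f' s) \<le> B"
  shows "norm (f b - f a) \<le> B * (b - a)"
proof (cases "a = b")
  case True then show ?thesis by simp
next
  case False
  then have ab: "a < b" using assms(1) by simp
  have cont: "continuous_on {a..b} f"
    by (rule continuous_at_imp_continuous_on) (use der has_vector_derivative_continuous in blast)
  have "\<exists>x\<in>{a<..<b}. norm (f b - f a) \<le> norm ((\<lambda>h. h *\<^sub>R f' x) (b - a))"
    by (rule mvt_general[OF ab cont]) (use der in \<open>auto simp: has_vector_derivative_def\<close>)
  then obtain x where x: "x \<in> {a<..<b}" and le: "norm (f b - f a) \<le> norm ((b - a) *\<^sub>R f' x)" by auto
  have "norm ((b - a) *\<^sub>R f' x) = (b - a) * norm (f' x)" using ab by simp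
  also have "\<dots> \<le> (b - a) * B" using bd[OF x] ab by (intro mult_left_mono) auto
  finally show ?thesis using le by (simp add: mult.commute)
qed

context
  fixes V :: "'a::euclidean_space \<Rightarrow> 'a" and phi :: "real \<Rightarrow> 'a \<Rightarrow> 'a" and e r M L T :: real and b :: 'a
  assumes flow: "\<And>x. x \<in> ball 0 r \<Longrightarrow> phi 0 x = x"
    and flowd: "\<And>x t. x \<in> ball 0 r \<Longrightarrow> t \<in> {-e<..<e} \<Longrightarrow> ((\<lambda>s. phi s x) has_vector_derivative V (phi t x)) (at t)"
    and Mb: "\<And>y. y \<in> cball 0 (r+1) \<Longrightarrow> norm (V y) \<le> M"
    and Lb: "\<And>y z. y \<in> cball 0 (r+1) \<Longrightarrow> z \<in> cball 0 (r+1) \<Longrightarrow> norm (V y - V z) \<le> L * norm (y - z)"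
    and Mpos: "M > 0" and Lpos: "L > 0" and rpos: "r > 0" and epos: "e > 0"
    and Tpos: "T > 0" and Te: "T < e" and TM: "T * M \<le> 1/4" and TL: "T * L \<le> 1/2"
    and hsph: "\<And>x. x \<in> sphere 0 r \<Longrightarrow> V x \<bullet> x = b \<bullet> x"
begin

lemma flow_cont: "x \<in> ball 0 r \<Longrightarrow> 0 \<le> t \<Longrightarrow> t \<le> T \<Longrightarrow> continuous_on {0..t} (\<lambda>s. phi s x)"
proof (intro continuous_at_imp_continuous_on ballI)
  fix s assume x: "x \<in> ball 0 r" and t: "0 \<le> t" "t \<le> T" and s: "s \<in> {0..t}"
  then have "s \<in> {-e<..<e}" using Te epos by auto
  then show "isCont (\<lambda>s. phi s x) s" by (rule has_vector_derivative_continuous[OF flowd[OF x]])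
qed

lemma flow_stay_aux:
  assumes x: "x \<in> ball 0 r"
  shows "\<forall>s\<in>{0..T}. norm (phi s x - x) < 1/2"
proof (rule ccontr)
  assume neg: "\<not> (\<forall>s\<in>{0..T}. norm (phi s x - x) < 1/2)"
  define Z where "Z = {s\<in>{0..T}. 1/2 \<le> norm (phi s x - x)}"
  have ne: "Z \<noteq> {}" using neg unfolding Z_def by auto
  have cl: "closed Z"
  proof -
    have "continuous_on {0..T} (\<lambda>s. norm (phi s x - x))"
      using flow_cont[OF x, of T] Tpos by (intro continuous_intros) auto
    then show ?thesis unfolding Z_def
      by (intro continuous_on_closed_Collect_le continuous_on_const) auto
  qed
  define s1 where "s1 = Inf Z"
  have bdd: "bdd_below Z" unfolding Z_def by (auto intro: bdd_belowI[of _ 0])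
  have s1Z: "s1 \<in> Z" unfolding s1_def by (rule closed_contains_Inf[OF ne bdd cl])
  have below: "\<And>s. s \<in> {0..<s1} \<Longrightarrow> norm (phi s x - x) < 1/2"
  proof -
    fix s assume s: "s \<in> {0..<s1}"
    have "s \<notin> Z" using s cInf_lower[OF _ bdd] unfolding s1_def by force
    moreover have "s \<in> {0..T}" using s s1Z unfolding Z_def by auto
    ultimately show "norm (phi s x - x) < 1/2" unfolding Z_def by auto
  qed
  have s1r: "0 \<le> s1" "s1 \<le> T" using s1Z unfolding Z_def by auto
  have "norm ((\<lambda>s. phi s x) s1 - (\<lambda>s. phi s x) 0) \<le> M * (s1 - 0)"
  proof (rule mvt_bound[OF s1r(1)])
    fix s assume "s \<in> {0..s1}"
    then show "((\<lambda>s. phi s x) has_vector_derivative V (phi s x)) (at s)"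
      using flowd[OF x] s1r Te by auto
  next
    fix s assume s: "s \<in> {0<..<s1}"
    have "norm (phi s x - x) < 1/2" using below s by auto
    moreover have "norm x < r" using x by simp
    ultimately have "norm (phi s x) \<le> r + 1" using norm_triangle_ineq[of "phi s x - x" x] by simp
    then show "norm (V (phi s x)) \<le> M" using Mb by simp
  qed
  then have "norm (phi s1 x - x) \<le> M * s1" using flow[OF x] by simp
  also have "\<dots> \<le> M * T" using s1r Mpos by simp
  finally have "norm (phi s1 x - x) < 1/2" using TM by (simp add: mult.commute)
  then show False using s1Z unfolding Z_def by auto
qed

lemma flow_stay:
  assumes x: "x \<in> ball 0 r" and s: "0 \<le> s" "s \<le> T"
  shows "norm (phi s x - x) \<le> M * s"
proof -
  have "norm ((\<lambda>s. phi s x) s - (\<lambda>s. phi s x) 0) \<le> M * (s - 0)"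
  proof (rule mvt_bound[OF s(1)])
    fix \<sigma> assume "\<sigma> \<in> {0..s}"
    then show "((\<lambda>s. phi s x) has_vector_derivative V (phi \<sigma> x)) (at \<sigma>)"
      using flowd[OF x] s Te by auto
  next
    fix \<sigma> assume \<sigma>: "\<sigma> \<in> {0<..<s}"
    have "norm (phi \<sigma> x - x) < 1/2" using flow_stay_aux[OF x] \<sigma> s by auto
    moreover have "norm x < r" using x by simp
    ultimately have "norm (phi \<sigma> x) \<le> r + 1" using norm_triangle_ineq[of "phi \<sigma> x - x" x] by simp
    then show "norm (V (phi \<sigma> x)) \<le> M" using Mb by simp
  qed
  then show ?thesis using flow[OF x] by simp
qed

lemma flow_in:
  assumes x: "x \<in> ball 0 r" and s: "0 \<le> s" "s \<le> T"
  shows "phi s x \<in> cball 0 (r+1)"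
proof -
  have "norm (phi s x - x) \<le> 1/4" using flow_stay[OF x s] s TM Mpos
    by (smt (verit) mult.commute mult_left_mono)
  moreover have "norm x < r" using x by simp
  ultimately show ?thesis using norm_triangle_ineq[of "phi s x - x" x] by simp
qed

lemma flow_taylor:
  assumes x: "x \<in> ball 0 r" and t: "0 \<le> t" "t \<le> T"
  shows "norm (phi t x - x - t *\<^sub>R V x) \<le> L * M * t^2"
proof -
  have xin: "x \<in> cball 0 (r+1)" using x by simp
  have "norm ((\<lambda>s. phi s x - x - s *\<^sub>R V x) t - (\<lambda>s. phi s x - x - s *\<^sub>R V x) 0) \<le> (L * M * t) * (t - 0)"
  proof (rule mvt_bound[OF t(1), where f' = "\<lambda>s. V (phi s x) - V x"])
    fix \<sigma> assume "\<sigma> \<in> {0..t}"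
    then have "((\<lambda>s. phi s x) has_vector_derivative V (phi \<sigma> x)) (at \<sigma>)"
      using flowd[OF x] t Te by auto
    then show "((\<lambda>s. phi s x - x - s *\<^sub>R V x) has_vector_derivative V (phi \<sigma> x) - V x) (at \<sigma>)"
      by (auto intro!: derivative_eq_intros)
  next
    fix \<sigma> assume \<sigma>: "\<sigma> \<in> {0<..<t}"
    have "norm (V (phi \<sigma> x) - V x) \<le> L * norm (phi \<sigma> x - x)"
      using Lb[OF flow_in[OF x] xin] \<sigma> t by auto
    also have "\<dots> \<le> L * (M * \<sigma>)" using flow_stay[OF x, of \<sigma>] \<sigma> t Lpos by (intro mult_left_mono) auto
    also have "\<dots> \<le> L * M * t" using \<sigma> Lpos Mpos by auto
    finally show "norm (V (phi \<sigma> x) - V x) \<le> L * M * t" .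
  qed
  then show ?thesis using flow[OF x] by (simp add: power2_eq_square mult.assoc)
qed

lemma flow_lip:
  assumes x: "x \<in> ball 0 r" and y: "y \<in> ball 0 r" and t: "0 \<le> t" "t \<le> T"
  shows "norm (phi t x - phi t y) \<le> 2 * norm (x - y)"
proof -
  define d where "d = (\<lambda>s. phi s x - phi s y)"
  have cd: "continuous_on {0..t} (\<lambda>s. norm (d s))"
    unfolding d_def using flow_cont[OF x t] flow_cont[OF y t] by (intro continuous_intros)
  obtain s where s: "s \<in> {0..t}" and smax: "\<And>\<sigma>. \<sigma> \<in> {0..t} \<Longrightarrow> norm (d \<sigma>) \<le> norm (d s)"
    using continuous_attains_sup[OF compact_Icc _ cd] t by fastforce
  define m where "m = norm (d s)"
  have "norm (d s - d 0) \<le> (L * m) * (s - 0)"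
  proof (rule mvt_bound[where f' = "\<lambda>\<sigma>. V (phi \<sigma> x) - V (phi \<sigma> y)"])
    show "0 \<le> s" using s by simp
  next
    fix \<sigma> assume "\<sigma> \<in> {0..s}"
    then show "(d has_vector_derivative V (phi \<sigma> x) - V (phi \<sigma> y)) (at \<sigma>)"
      unfolding d_def using flowd[OF x, of \<sigma>] flowd[OF y, of \<sigma>] s t Te
      by (auto intro!: derivative_eq_intros)
  next
    fix \<sigma> assume \<sigma>: "\<sigma> \<in> {0<..<s}"
    have "norm (V (phi \<sigma> x) - V (phi \<sigma> y)) \<le> L * norm (d \<sigma>)"
      unfolding d_def using Lb[OF flow_in[OF x] flow_in[OF y]] \<sigma> s t by auto
    also have "\<dots> \<le> L * m" unfolding m_def using smax[of \<sigma>] \<sigma> s Lpos by (intro mult_left_mono) auto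
    finally show "norm (V (phi \<sigma> x) - V (phi \<sigma> y)) \<le> L * m" .
  qed
  then have "m \<le> norm (x - y) + L * m * s"
    unfolding m_def d_def using flow[OF x] flow[OF y] norm_triangle_ineq[of "d s - d 0" "d 0"]
    by (simp add: d_def)
  also have "L * m * s \<le> m / 2"
  proof -
    have "L * m * s = m * (s * L)" by simp
    also have "\<dots> \<le> m * (1/2)"
    proof -
      have "s * L \<le> T * L" using s t Lpos by (intro mult_right_mono) auto
      then show ?thesis using TL unfolding m_def by (intro mult_left_mono) auto
    qed
    finally show ?thesis by simp
  qed
  finally have "m \<le> 2 * norm (x - y)" by simp
  moreover have "norm (phi t x - phi t y) \<le> m" using smax[of t] t unfolding m_def d_def by auto
  ultimately show ?thesis by simp
qed

lemma h_bound:
  assumes x: "norm x \<le> r"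
  shows "\<bar>x \<bullet> (V x - b)\<bar> \<le> (M + norm b + r * L) * (r - norm x)"
proof -
  obtain x' where x': "norm x' = r" "norm (x - x') = r - norm x"
  proof (cases "x = 0")
    case True
    obtain i :: 'a where i: "i \<in> Basis" using nonempty_Basis by blast
    show ?thesis by (rule that[of "r *\<^sub>R i"]) (use True i rpos in auto)
  next
    case False
    have nx: "norm x > 0" using False by simp
    have "norm (x - (r / norm x) *\<^sub>R x) = norm ((1 - r / norm x) *\<^sub>R x)" by (simp add: algebra_simps)
    also have "\<dots> = \<bar>1 - r / norm x\<bar> * norm x" by simp
    also have "\<dots> = (r / norm x - 1) * norm x" using x nx by (simp add: field_simps)
    also have "\<dots> = r - norm x" using nx by (simp add: field_simps)
    finally have "norm (x - (r / norm x) *\<^sub>R x) = r - norm x" .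
    moreover have "norm ((r / norm x) *\<^sub>R x) = r" using nx rpos by simp
    ultimately show ?thesis by (rule that[rotated])
  qed
  have x'in: "x' \<in> cball 0 (r+1)" "x \<in> cball 0 (r+1)" using x' x by auto
  have h0: "x' \<bullet> (V x' - b) = 0" using hsph[of x'] x' by (simp add: inner_diff_right inner_commute)
  have eq: "x \<bullet> (V x - b) = (x - x') \<bullet> (V x - b) + x' \<bullet> (V x - V x')"
    using h0 by (simp add: algebra_simps inner_diff_right inner_diff_left)
  have "\<bar>(x - x') \<bullet> (V x - b)\<bar> \<le> norm (x - x') * (M + norm b)"
  proof -
    have "\<bar>(x - x') \<bullet> (V x - b)\<bar> \<le> norm (x - x') * norm (V x - b)" by (rule Cauchy_Schwarz_ineq2)
    also have "norm (V x - b) \<le> M + norm b" using Mb[OF x'in(2)] norm_triangle_ineq4[of "V x" b] by simp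
    then have "norm (x - x') * norm (V x - b) \<le> norm (x - x') * (M + norm b)" by (intro mult_left_mono) auto
    finally show ?thesis .
  qed
  moreover have "\<bar>x' \<bullet> (V x - V x')\<bar> \<le> r * (L * norm (x - x'))"
  proof -
    have "\<bar>x' \<bullet> (V x - V x')\<bar> \<le> norm x' * norm (V x - V x')" by (rule Cauchy_Schwarz_ineq2)
    also have "\<dots> \<le> r * (L * norm (x - x'))" using x' Lb[OF x'in(2) x'in(1)] rpos by (intro mult_mono) auto
    finally show ?thesis .
  qed
  ultimately have "\<bar>x \<bullet> (V x - b)\<bar> \<le> norm (x - x') * (M + norm b) + r * (L * norm (x - x'))"
    unfolding eq by linarith
  then show ?thesis using x' by (simp add: algebra_simps)
qed

lemma expand:
  assumes x: "x \<in> ball 0 r" and t: "0 \<le> t" "t \<le> T" "t \<le> 1"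
  shows "\<bar>(norm (phi t x - t *\<^sub>R b))^2 - (norm x)^2 - 2 * t * (x \<bullet> (V x - b))\<bar>
           \<le> (2 * r * L * M + (M + norm b + L * M)^2) * t^2"
proof -
  define E where "E = phi t x - x - t *\<^sub>R V x"
  define u where "u = t *\<^sub>R (V x - b) + E"
  have E: "norm E \<le> L * M * t^2" unfolding E_def by (rule flow_taylor[OF x t(1,2)])
  have w: "phi t x - t *\<^sub>R b = x + u" unfolding u_def E_def by (simp add: algebra_simps)
  have sq: "(norm (x + u))^2 = (norm x)^2 + 2 * (x \<bullet> u) + (norm u)^2"
    by (simp add: power2_norm_eq_inner inner_add_left inner_add_right inner_commute)
  have xu: "x \<bullet> u = t * (x \<bullet> (V x - b)) + x \<bullet> E" unfolding u_def by (simp add: inner_add_right)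
  have xin: "x \<in> cball 0 (r+1)" and nx: "norm x < r" using x by auto
  have xE: "\<bar>x \<bullet> E\<bar> \<le> r * (L * M * t^2)"
  proof -
    have "\<bar>x \<bullet> E\<bar> \<le> norm x * norm E" by (rule Cauchy_Schwarz_ineq2)
    also have "\<dots> \<le> r * (L * M * t^2)" using nx E rpos by (intro mult_mono) auto
    finally show ?thesis .
  qed
  have nu: "norm u \<le> (M + norm b + L * M) * t"
  proof -
    have "norm u \<le> norm (t *\<^sub>R (V x - b)) + norm E" unfolding u_def by (rule norm_triangle_ineq)
    also have "norm (t *\<^sub>R (V x - b)) = t * norm (V x - b)" using t by simp
    also have "t * norm (V x - b) \<le> t * (M + norm b)"
      using Mb[OF xin] norm_triangle_ineq4[of "V x" b] t by (intro mult_left_mono) auto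
    also have "L * M * t^2 \<le> L * M * t"
      using t Lpos Mpos by (intro mult_left_mono) (auto simp: power2_eq_square intro: mult_left_le_one_le)
    then have "norm E \<le> L * M * t" using E by linarith
    finally show ?thesis using t by (simp add: algebra_simps) 
  qed
  have nu2: "(norm u)^2 \<le> ((M + norm b + L * M) * t)^2"
    using nu by (intro power_mono) auto
  have "\<bar>(norm (phi t x - t *\<^sub>R b))^2 - (norm x)^2 - 2 * t * (x \<bullet> (V x - b))\<bar>
        = \<bar>2 * (x \<bullet> E) + (norm u)^2\<bar>" unfolding w sq xu by (simp add: algebra_simps)
  also have "\<dots> \<le> 2 * (r * (L * M * t^2)) + ((M + norm b + L * M) * t)^2"
  proof -
    have a: "x \<bullet> E \<le> r * (L * M * t^2)" "- (x \<bullet> E) \<le> r * (L * M * t^2)" using xE by auto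
    have c: "0 \<le> (norm u)^2" "0 \<le> ((M + norm b + L * M) * t)^2" by auto
    show ?thesis unfolding abs_le_iff using a c nu2 by linarith
  qed
  also have "\<dots> = (2 * r * L * M + (M + norm b + L * M)^2) * t^2" by (simp add: algebra_simps power2_eq_square)
  finally show ?thesis .
qed

lemma outer:
  assumes x: "x \<in> ball 0 r" and t: "0 \<le> t" "t \<le> T" "t \<le> 1"
    and tLh: "2 * t * (M + norm b + r * L) \<le> r"
  shows "norm (phi t x - t *\<^sub>R b) \<le> r + ((2 * r * L * M + (M + norm b + L * M)^2) / (2 * r)) * t^2"
proof -
  define C where "C = 2 * r * L * M + (M + norm b + L * M)^2"
  define Lh where "Lh = M + norm b + r * L"
  have nx: "norm x < r" using x by simp
  have ex: "(norm (phi t x - t *\<^sub>R b))^2 \<le> (norm x)^2 + 2 * t * (x \<bullet> (V x - b)) + C * t^2"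
    using expand[OF x t] unfolding C_def by (simp add: abs_le_iff)
  have hb: "x \<bullet> (V x - b) \<le> Lh * (r - norm x)" using h_bound[of x] nx unfolding Lh_def by simp
  have "2 * t * (x \<bullet> (V x - b)) \<le> 2 * t * (Lh * (r - norm x))" using hb t by (intro mult_left_mono) auto
  also have "\<dots> = (2 * t * Lh) * (r - norm x)" by simp
  also have "\<dots> \<le> r * (r - norm x)" using tLh nx unfolding Lh_def by (intro mult_right_mono) auto
  also have "\<dots> \<le> (r + norm x) * (r - norm x)" using nx by (intro mult_right_mono) auto
  also have "\<dots> = r^2 - (norm x)^2" by (simp add: algebra_simps power2_eq_square)
  finally have "(norm (phi t x - t *\<^sub>R b))^2 \<le> r^2 + C * t^2" using ex by linarith
  also have "\<dots> \<le> (r + (C / (2 * r)) * t^2)^2"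
  proof -
    have "(r + (C / (2 * r)) * t^2)^2 = r^2 + C * t^2 + ((C / (2 * r)) * t^2)^2"
      using rpos by (simp add: power2_eq_square field_simps)
    then show ?thesis by simp
  qed
  finally have "(norm (phi t x - t *\<^sub>R b))^2 \<le> (r + (C / (2 * r)) * t^2)^2" .
  moreover have "0 \<le> r + (C / (2 * r)) * t^2" unfolding C_def using rpos Lpos Mpos by (intro add_nonneg_nonneg) auto
  ultimately show ?thesis unfolding C_def by (rule power2_le_imp_le)
qed

lemma inner_est:
  assumes xn: "norm x = r - t^2" and t: "0 < t" "t \<le> T" "t \<le> 1" and tr: "t^2 < r"
  shows "(phi t x - t *\<^sub>R b) \<bullet> x \<ge> r^2 - ((4 * r + 2 * (M + norm b + r * L) + (2 * r * L * M + (M + norm b + L * M)^2) + (M + norm b)^2) / 2) * t^2"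
proof -
  define C where "C = 2 * r * L * M + (M + norm b + L * M)^2"
  define Lh where "Lh = M + norm b + r * L"
  define w where "w = phi t x - t *\<^sub>R b"
  have x: "x \<in> ball 0 r" using xn t by simp
  have ex: "(norm x)^2 + 2 * t * (x \<bullet> (V x - b)) - C * t^2 \<le> (norm w)^2"
    using expand[OF x _ t(2,3)] t unfolding C_def w_def abs_le_iff by linarith
  have rx: "r - norm x = t^2" using xn by simp
  have hb: "- (x \<bullet> (V x - b)) \<le> Lh * t^2"
  proof -
    have "norm x \<le> r" using xn t by simp
    then show ?thesis using h_bound[of x] unfolding Lh_def rx abs_le_iff by linarith
  qed
  have Lh0: "0 \<le> Lh" unfolding Lh_def using Mpos Lpos rpos by auto
  have "2 * t * (- (x \<bullet> (V x - b))) \<le> 2 * t * (Lh * t^2)" using hb t by (intro mult_left_mono) auto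
  then have "- (2 * t * (x \<bullet> (V x - b))) \<le> 2 * t * (Lh * t^2)" by (simp only: mult_minus_right)
  also have "\<dots> = 2 * Lh * t^2 * t" by (simp add: algebra_simps)
  also have "\<dots> \<le> 2 * Lh * t^2 * 1" using t Lh0 by (intro mult_left_mono) auto
  finally have h1: "- (2 * t * (x \<bullet> (V x - b))) \<le> 2 * Lh * t^2" by simp
  have x2: "(norm x)^2 \<ge> r^2 - 2 * r * t^2"
  proof -
    have "(norm x)^2 = r^2 - 2 * r * t^2 + (t^2)^2" unfolding xn by (simp add: power2_diff)
    moreover have "0 \<le> (t^2)^2" by simp
    ultimately show ?thesis by linarith
  qed
  have wx: "norm (w - x) \<le> (M + norm b) * t"
  proof -
    have "w - x = (phi t x - x) - t *\<^sub>R b" unfolding w_def by simp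
    then have "norm (w - x) \<le> norm (phi t x - x) + norm (t *\<^sub>R b)" by (metis norm_triangle_ineq4)
    also have "\<dots> \<le> M * t + t * norm b" using flow_stay[OF x, of t] t by simp
    finally show ?thesis by (simp add: algebra_simps)
  qed
  have wx2: "(norm (w - x))^2 \<le> ((M + norm b) * t)^2" using wx by (intro power_mono) auto
  have pol: "(norm (w - x))^2 = (norm w)^2 - 2 * (w \<bullet> x) + (norm x)^2"
    by (simp add: power2_norm_eq_inner inner_diff_left inner_diff_right inner_commute)
  have "w \<bullet> x \<ge> r^2 - ((4 * r + 2 * Lh + C + (M + norm b)^2) / 2) * t^2"
  proof -
    have e1: "((M + norm b) * t)^2 = (M + norm b)^2 * t^2" by (simp add: power_mult_distrib)
    have e2: "((4 * r + 2 * Lh + C + (M + norm b)^2) / 2) * t^2 = 2 * (r * t^2) + Lh * t^2 + (C * t^2) / 2 + ((M + norm b)^2 * t^2) / 2"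
      by (simp only: distrib_right add_divide_distrib)
    have e3: "2 * Lh * t^2 = 2 * (Lh * t^2)" "2 * r * t^2 = 2 * (r * t^2)" by simp_all
    show ?thesis unfolding e2 using ex h1 x2 wx2 pol e1 e3 by linarith
  qed
  then show ?thesis unfolding w_def C_def Lh_def .
qed

lemma per_t:
  fixes K :: real
  defines "K \<equiv> (2 * r * L * M + (M + norm b + L * M)^2) / (2 * r)
     + ((4 * r + 2 * (M + norm b + r * L) + (2 * r * L * M + (M + norm b + L * M)^2) + (M + norm b)^2) / 2) / r"
  assumes com: "center_of_mass (phi t ` ball 0 r) = 0"
    and t: "0 < t" "t \<le> T" "t \<le> 1" and tLh: "2 * t * (M + norm b + r * L) \<le> r"
    and tr: "t^2 < r" and tK: "K * t^2 \<le> r / 2"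
  shows "norm b * (r / 2) ^ DIM('a) \<le> 2 * real DIM('a) * K * (2 * r) ^ DIM('a) * t"
proof -
  define C where "C = 2 * r * L * M + (M + norm b + L * M)^2"
  define C3 where "C3 = (4 * r + 2 * (M + norm b + r * L) + (2 * r * L * M + (M + norm b + L * M)^2) + (M + norm b)^2) / 2"
  have C0: "C \<ge> 0" "C3 \<ge> 0" unfolding C_def C3_def using rpos Lpos Mpos by auto
  have Keq: "K = C / (2 * r) + C3 / r" unfolding K_def C_def C3_def by (rule refl)
  have KC: "C / (2 * r) \<le> K" "C3 / r \<le> K" unfolding Keq
    using C0 rpos by auto
  have K0: "K \<ge> 0" using KC C0 rpos by (smt (verit) divide_nonneg_pos)
  define R1 where "R1 = r - K * t^2"
  define R2 where "R2 = r + K * t^2"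
  define p where "p = t *\<^sub>R b"
  define A where "A = phi t ` ball 0 r"
  define n where "n = DIM('a)"
  define \<omega> where "\<omega> = measure lebesgue (ball (0::'a) 1)"
  have \<omega>pos: "\<omega> > 0" unfolding \<omega>_def using content_ball_pos[of "1::real" "0::'a"] by (simp add: measure_completion)
  have R1b: "R1 \<ge> r / 2" unfolding R1_def using tK by simp
  have R2b: "R2 \<le> 2 * r" "R2 \<ge> R1" unfolding R2_def R1_def using tK K0 rpos by (auto intro: mult_nonneg_nonneg)
  have R1pos: "R1 > 0" using R1b rpos by simp
  have lip: "2-lipschitz_on (ball 0 r) (phi t)"
    by (rule lipschitz_onI) (use flow_lip t in \<open>auto simp: dist_norm\<close>)
  have contA: "continuous_on (ball 0 r) (phi t)" by (rule lipschitz_on_continuous_on[OF lip])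
  have sub1: "A \<subseteq> cball p R2"
  proof
    fix y assume "y \<in> A"
    then obtain x where x: "x \<in> ball 0 r" "y = phi t x" unfolding A_def by auto
    have "norm (phi t x - p) \<le> r + (C / (2 * r)) * t^2" using outer[OF x(1) _ t(2,3) tLh] t unfolding p_def C_def by simp
    also have "\<dots> \<le> R2" unfolding R2_def using KC by (intro add_left_mono mult_right_mono) auto
    finally show "y \<in> cball p R2" using x by (simp add: dist_norm norm_minus_commute)
  qed
  have sub2: "ball p R1 \<subseteq> A"
  proof
    fix q assume q: "q \<in> ball p R1"
    define \<rho> where "\<rho> = r - t^2"
    have \<rho>pos: "\<rho> > 0" "\<rho> < r" unfolding \<rho>_def using tr t by auto
    have cb: "cball 0 \<rho> \<subseteq> ball 0 r" using \<rho>pos by auto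
    have "\<exists>y\<in>cball 0 \<rho>. (\<lambda>y. phi t y - p) y = q - p"
    proof (rule brouwer_hit[OF \<rho>pos(1)])
      show "continuous_on (cball 0 \<rho>) (\<lambda>y. phi t y - p)"
        by (intro continuous_intros continuous_on_subset[OF contA cb])
    next
      fix y :: 'a assume y: "y \<in> sphere 0 \<rho>"
      have nq: "norm (q - p) < R1" using q by (simp add: dist_norm norm_minus_commute)
      have "norm (q - p) * \<rho> \<le> norm (q - p) * r" using \<rho>pos by (intro mult_left_mono) auto
      also have "\<dots> < R1 * r" using nq rpos by simp
      also have "R1 * r = r^2 - (K * r) * t^2" unfolding R1_def by (simp add: algebra_simps power2_eq_square)
      also have "\<dots> \<le> r^2 - C3 * t^2"
      proof -
        have "C3 \<le> K * r" using KC(2) rpos by (simp add: divide_le_eq mult.commute)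
        then show ?thesis by (simp add: mult_right_mono)
      qed
      also have "\<dots> \<le> (phi t y - p) \<bullet> y"
        using inner_est[of y t] y t tr unfolding p_def C3_def \<rho>_def by simp
      finally show "norm (q - p) * \<rho> < (phi t y - p) \<bullet> y" .
    qed
    then obtain y where "y \<in> cball 0 \<rho>" "phi t y = q" by auto
    then show "q \<in> A" unfolding A_def using cb by force
  qed
  have Aleb: "A \<in> sets lebesgue" unfolding A_def by (rule image_meas[OF rpos contA])
  have Ameas: "A \<in> lmeasurable"
    by (rule bounded_set_imp_lmeasurable[OF bounded_subset[OF bounded_cball sub1] Aleb])
  have mB: "measure lebesgue (ball p R1) = R1 ^ n * \<omega>" unfolding n_def \<omega>_def
    using measure_ball_eq(1)[of R1 p] R1pos by simp
  have mC: "measure lebesgue (cball p R2) = R2 ^ n * \<omega>" unfolding n_def \<omega>_def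
    using measure_ball_eq(2)[of R2 p] R1pos R2b by simp
  have mA1: "measure lebesgue A \<ge> R1 ^ n * \<omega>"
    using measure_mono_fmeasurable[OF sub2 _ Ameas] mB by (simp add: fmeasurableD)
  have mA2: "measure lebesgue A \<le> R2 ^ n * \<omega>"
    using measure_mono_fmeasurable[OF sub1 _ lmeasurable_cball] mC Aleb by simp
  have mApos: "measure lebesgue A > 0" using mA1 R1pos \<omega>pos by (smt (verit) zero_less_mult_iff zero_less_power)
  have int0: "integral A (\<lambda>x. x) = 0"
    using com mApos unfolding center_of_mass_def A_def by simp
  note IA = int_facts[OF Ameas sub1]
  have intA: "integral A (\<lambda>x. x - p) = - (measure lebesgue A *\<^sub>R p)" using IA(4) int0 by simp
  define D where "D = A - ball p R1"
  have Dmeas: "D \<in> lmeasurable" unfolding D_def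
    by (intro bounded_set_imp_lmeasurable bounded_subset[OF bounded_cball] sets.Diff)
       (use sub1 Aleb in auto)
  have Dsub: "D \<subseteq> cball p R2" unfolding D_def using sub1 by auto
  have intB: "(\<lambda>x. x - p) integrable_on ball p R1"
    using int_facts(2)[OF lmeasurable_ball, of p R1 p R1] by auto
  have "integral D (\<lambda>x. x - p) = integral A (\<lambda>x. x - p) - integral (ball p R1) (\<lambda>x. x - p)"
    unfolding D_def by (rule integral_setdiff[OF IA(2) intB]) (use sub2 in auto)
  then have intD: "integral D (\<lambda>x. x - p) = - (measure lebesgue A *\<^sub>R p)"
    using intA integral_ball_centered[of p R1] by simp
  have mD: "measure lebesgue D = measure lebesgue A - R1 ^ n * \<omega>"
    unfolding D_def using measurable_measure_Diff[OF Ameas _ sub2] mB by simp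
  have "norm (integral D (\<lambda>x. x - p)) = norm (measure lebesgue A *\<^sub>R p)"
    by (simp only: intD norm_minus_cancel)
  also have "\<dots> = measure lebesgue A * (t * norm b)" unfolding p_def using mApos t by simp
  finally have "measure lebesgue A * (t * norm b) = norm (integral D (\<lambda>x. x - p))" by simp
  also have "\<dots> \<le> R2 * measure lebesgue D" using int_facts(3)[OF Dmeas Dsub] .
  also have "\<dots> \<le> R2 * (R2 ^ n * \<omega> - R1 ^ n * \<omega>)" unfolding mD using mA2 R1pos R2b
    by (intro mult_left_mono) auto
  finally have m1: "measure lebesgue A * (t * norm b) \<le> \<omega> * (R2 * (R2 ^ n - R1 ^ n))" by (simp add: algebra_simps)
  have "R1 ^ n * \<omega> * (t * norm b) \<le> measure lebesgue A * (t * norm b)"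
    using mA1 t by (intro mult_right_mono) auto
  also note m1
  also have "R2 * (R2 ^ n - R1 ^ n) \<le> real n * R2 ^ n * (R2 - R1)"
    using power_diff_bound[of R1 R2 n] R1pos R2b unfolding n_def by simp
  also have "R2 - R1 = 2 * K * t^2" unfolding R1_def R2_def by simp
  finally have "\<omega> * (R1 ^ n * (t * norm b)) \<le> \<omega> * (real n * R2 ^ n * (2 * K * t^2))"
    using \<omega>pos by (simp add: algebra_simps mult_left_mono)
  then have "R1 ^ n * (t * norm b) \<le> real n * R2 ^ n * (2 * K * t^2)" using \<omega>pos by simp
  then have "t * (R1 ^ n * norm b) \<le> t * (2 * real n * K * R2 ^ n * t)"
    by (simp add: algebra_simps power2_eq_square)
  then have "R1 ^ n * norm b \<le> 2 * real n * K * R2 ^ n * t" using t by simp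
  moreover have "(r / 2) ^ n * norm b \<le> R1 ^ n * norm b"
    using R1b rpos by (intro mult_right_mono power_mono) auto
  moreover have "2 * real n * K * R2 ^ n * t \<le> 2 * real n * K * (2 * r) ^ n * t"
    using R2b R1pos K0 t by (intro mult_right_mono mult_left_mono power_mono) auto
  ultimately show ?thesis unfolding n_def by (simp only: mult.commute[of "norm b"])
qed

lemma b_zero:
  assumes com: "\<forall>t\<in>{-e<..<e}. center_of_mass (phi t ` ball 0 r) = 0"
  shows "b = 0"
proof (rule ccontr)
  assume bne: "b \<noteq> 0"
  define K where "K \<equiv> (2 * r * L * M + (M + norm b + L * M)^2) / (2 * r)
     + ((4 * r + 2 * (M + norm b + r * L) + (2 * r * L * M + (M + norm b + L * M)^2) + (M + norm b)^2) / 2) / r"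
  define Lh where "Lh = M + norm b + r * L"
  define n where "n = DIM('a)"
  have K0: "K \<ge> 0" unfolding K_def using rpos Lpos Mpos by (intro add_nonneg_nonneg divide_nonneg_pos) auto
  have Lh0: "Lh \<ge> 0" unfolding Lh_def using rpos Lpos Mpos by auto
  define c0 where "c0 = 2 * real n * K * (2 * r) ^ n / (r / 2) ^ n"
  have c00: "c0 \<ge> 0" unfolding c0_def using K0 rpos by auto
  define t1 where "t1 = min T (min 1 (min (r / (2 * Lh + 1)) (r / (2 * K + 2))))"
  define t where "t = min t1 (norm b / (c0 + 1))"
  have t1pos: "t1 > 0" unfolding t1_def using Tpos rpos Lh0 K0 by auto
  have tpos: "t > 0" unfolding t_def using t1pos bne c00 by auto
  have tT: "t \<le> T" "t \<le> 1" unfolding t_def t1_def by auto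
  have tLh: "2 * t * Lh \<le> r"
  proof -
    have "t \<le> r / (2 * Lh + 1)" unfolding t_def t1_def by auto
    then have "t * (2 * Lh + 1) \<le> r" using Lh0 by (simp add: le_divide_eq)
    then show ?thesis using tpos by (simp add: algebra_simps)
  qed
  have tK: "t \<le> r / (2 * K + 2)" unfolding t_def t1_def by auto
  then have tK': "t * (2 * K + 2) \<le> r" using K0 by (simp add: le_divide_eq)
  have tt: "t^2 \<le> t" using tpos tT by (simp add: power2_eq_square mult_left_le_one_le)
  have tKe: "t * (2 * K + 2) = 2 * (t * K) + 2 * t" by (simp add: algebra_simps)
  have tK0: "t * K \<ge> 0" using tpos K0 by simp
  have tr: "t^2 < r" using tt tK' tKe tK0 tpos by linarith
  have tK2: "K * t^2 \<le> r / 2"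
  proof -
    have "K * t^2 \<le> K * t" using tt K0 by (intro mult_left_mono)
    also have "\<dots> \<le> r / 2" using tK' tKe tpos by (simp add: mult.commute)
    finally show ?thesis .
  qed
  have "center_of_mass (phi t ` ball 0 r) = 0" using com tT Te tpos by auto
  from per_t[OF this tpos tT(1) tT(2) tLh[unfolded Lh_def] tr tK2[unfolded K_def]]
  have "norm b * (r / 2) ^ n \<le> 2 * real n * K * (2 * r) ^ n * t" unfolding n_def K_def .
  moreover have "c0 * (r / 2) ^ n = 2 * real n * K * (2 * r) ^ n" unfolding c0_def using rpos by simp
  ultimately have "norm b * (r / 2) ^ n \<le> c0 * (r / 2) ^ n * t" by simp
  then have "norm b \<le> c0 * t" using rpos by (simp add: mult.commute)
  also have "\<dots> \<le> c0 * (norm b / (c0 + 1))" unfolding t_def using c00 by (intro mult_left_mono) auto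
  also have "\<dots> < norm b" using bne c00 by (simp add: field_simps)
  finally show False by simp
qed

end


theorem lemma2:
  fixes V :: "'a::euclidean_space \<Rightarrow> 'a" and c :: 'a and r :: real
    and phi :: "real \<Rightarrow> 'a \<Rightarrow> 'a" and e :: real
  assumes "DIM('a) \<ge> 2"
    and "r > 0"
    and "C1_field V"
    and "e > 0"
    and "is_flow_on V e (ball c r) phi"
    and "\<forall>t\<in>{-e<..<e}. center_of_mass (phi t ` ball c r) = 0"
    and "\<exists>b::'a. \<forall>x\<in>sphere c r. V x \<bullet> x = b \<bullet> x"
  shows "\<forall>x\<in>sphere c r. V x \<bullet> x = 0"
proof -
  note rpos = assms(2) and epos = assms(4)
  have fl0: "\<And>x. x \<in> ball c r \<Longrightarrow> phi 0 x = x" using assms(5) unfolding is_flow_on_def by auto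
  have fld: "\<And>x t. x \<in> ball c r \<Longrightarrow> t \<in> {-e<..<e} \<Longrightarrow> ((\<lambda>s. phi s x) has_vector_derivative V (phi t x)) (at t)"
    using assms(5) unfolding is_flow_on_def by auto
  have c0: "c = 0"
  proof -
    have img: "phi 0 ` ball c r = ball c r" using fl0 by (auto simp: image_iff)
    have "(0::real) \<in> {-e<..<e}" using epos by simp
    then have "center_of_mass (phi 0 ` ball c r) = 0" using assms(6) by blast
    then have "center_of_mass (ball c r) = 0" unfolding img .
    moreover have "center_of_mass (ball c r) = c"
    proof -
      have I: "integral (ball c r) (\<lambda>x. x - c) = integral (ball c r) (\<lambda>x. x) - measure lebesgue (ball c r) *\<^sub>R c"
        using int_facts(4)[OF lmeasurable_ball, of c r c r] by auto
      have "integral (ball c r) (\<lambda>x. x) = measure lebesgue (ball c r) *\<^sub>R c"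
        using I integral_ball_centered[of c r] by simp
      moreover have "measure lebesgue (ball c r) > 0"
        using content_ball_pos[OF rpos, of c] by (simp add: measure_completion)
      ultimately show ?thesis unfolding center_of_mass_def by simp
    qed
    ultimately show ?thesis by simp
  qed
  obtain b :: 'a where hb: "\<forall>x\<in>sphere c r. V x \<bullet> x = b \<bullet> x" using assms(7) by blast
  obtain D :: "'a \<Rightarrow> 'a \<Rightarrow>\<^sub>L 'a" where Dd: "\<And>x. (V has_derivative blinfun_apply (D x)) (at x)"
    and Dc: "continuous_on UNIV D" using assms(3) unfolding C1_field_def by blast
  define K0 where "K0 = cball (0::'a) (r + 1)"
  have cK: "compact K0" "convex K0" unfolding K0_def by auto
  have "bounded (D ` K0)" using compact_continuous_image[OF continuous_on_subset[OF Dc] cK(1)] compact_imp_bounded by blast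
  then obtain B where B: "\<And>x. x \<in> K0 \<Longrightarrow> norm (D x) \<le> B" by (auto simp: bounded_iff)
  define L where "L = max B 0 + 1"
  have Lpos: "L > 0" unfolding L_def by simp
  have Lb: "norm (V y - V z) \<le> L * norm (y - z)" if "y \<in> K0" "z \<in> K0" for y z
  proof (rule differentiable_bound[OF cK(2) _ _ that])
    fix x assume "x \<in> K0"
    show "(V has_derivative blinfun_apply (D x)) (at x within K0)" using Dd has_derivative_at_withinI by blast
    show "onorm (blinfun_apply (D x)) \<le> L" using B[OF \<open>x \<in> K0\<close>] unfolding L_def norm_blinfun.rep_eq[symmetric] by linarith
  qed
  have contV: "continuous_on K0 V"
    by (rule continuous_at_imp_continuous_on) (use Dd has_derivative_continuous in blast)
  have "bounded (V ` K0)" using compact_continuous_image[OF contV cK(1)] compact_imp_bounded by blast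
  then obtain M0 where M0: "\<And>x. x \<in> K0 \<Longrightarrow> norm (V x) \<le> M0" by (auto simp: bounded_iff)
  define M where "M = max M0 0 + 1"
  have Mpos: "M > 0" unfolding M_def by simp
  have Mb: "\<And>y. y \<in> K0 \<Longrightarrow> norm (V y) \<le> M" using M0 unfolding M_def by force
  define T where "T = min (e / 2) (min (1 / (4 * M)) (1 / (2 * L)))"
  have Tpos: "T > 0" unfolding T_def using epos Mpos Lpos by auto
  have Te: "T < e" unfolding T_def using epos by auto
  have TM: "T * M \<le> 1/4"
  proof -
    have "T \<le> 1 / (4 * M)" unfolding T_def by auto
    then show ?thesis using Mpos by (simp add: le_divide_eq)
  qed
  have TL: "T * L \<le> 1/2"
  proof -
    have "T \<le> 1 / (2 * L)" unfolding T_def by auto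
    then show ?thesis using Lpos by (simp add: le_divide_eq)
  qed
  have bz: "b = 0"
  proof (rule b_zero[of r phi e V M L T b])
    show "\<And>x. x \<in> ball 0 r \<Longrightarrow> phi 0 x = x" using fl0 c0 by simp
    show "\<And>x t. x \<in> ball 0 r \<Longrightarrow> t \<in> {-e<..<e} \<Longrightarrow> ((\<lambda>s. phi s x) has_vector_derivative V (phi t x)) (at t)"
      using fld c0 by simp
    show "\<And>y. y \<in> cball 0 (r + 1) \<Longrightarrow> norm (V y) \<le> M" using Mb unfolding K0_def .
    show "\<And>y z. y \<in> cball 0 (r + 1) \<Longrightarrow> z \<in> cball 0 (r + 1) \<Longrightarrow> norm (V y - V z) \<le> L * norm (y - z)"
      using Lb unfolding K0_def .
    show "\<And>x. x \<in> sphere 0 r \<Longrightarrow> V x \<bullet> x = b \<bullet> x" using hb c0 by simp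
    show "\<forall>t\<in>{-e<..<e}. center_of_mass (phi t ` ball 0 r) = 0" using assms(6) c0 by simp
  qed (use Mpos Lpos rpos epos Tpos Te TM TL in auto)
  show ?thesis using hb bz by simp
qed

end
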